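(* Let $R$ be a commutative ring endowed with a translation-invariant partial order $\le$ on its additive group such that $R^+$ is closed under multiplication. If $R$ is archimedean and localizable, then $r^2\in R^+$ for all $r\in R$ (so $R$ is a partially ordered commutative ring).
   Context: Rings are commutative with unit $1$; $\mathbb{N}=\{1,2,\dots\}$. Translation-invariant means $r\le s$ implies $r+t\le s+t$; $R^+=\{r:0\le r\}$. A partially ordered commutative ring is such a ring whose positive cone is closed under multiplication and contains all squares. $R$ is archimedean if whenever $g,h\in R$ satisfy $kg+h\in R^+$ for all $k\in\mathbb{N}$, then $g\in R^+$. $\mathrm{Loc}(R)$ is the set of $s\in 1+R^+$ such that for all $r\in R$, $rs\in R^+$ implies $r\in R^+$. $R$ is localizable if for every $r\in R$ there exists $s\in\mathrm{Loc}(R)$ with $-s\le r\le s$. *)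

theory Defs
  imports Main
begin

definition trans_inv_porder :: "('a::comm_ring_1 \<Rightarrow> 'a \<Rightarrow> bool) \<Rightarrow> bool" where
  "trans_inv_porder le \<longleftrightarrow> reflp le \<and> transp le \<and> antisymp le \<and>
     (\<forall>r s t. le r s \<longrightarrow> le (r + t) (s + t))"

definition pos_cone :: "('a::comm_ring_1 \<Rightarrow> 'a \<Rightarrow> bool) \<Rightarrow> 'a set" where
  "pos_cone le = {r. le 0 r}"

definition archimedean_ord :: "('a::comm_ring_1 \<Rightarrow> 'a \<Rightarrow> bool) \<Rightarrow> bool" where
  "archimedean_ord le \<longleftrightarrow>
     (\<forall>g h. (\<forall>k::nat. k \<ge> 1 \<longrightarrow> of_nat k * g + h \<in> pos_cone le) \<longrightarrow> g \<in> pos_cone le)"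

definition Loc :: "('a::comm_ring_1 \<Rightarrow> 'a \<Rightarrow> bool) \<Rightarrow> 'a set" where
  "Loc le = {s. (\<exists>p\<in>pos_cone le. s = 1 + p) \<and>
                 (\<forall>r. r * s \<in> pos_cone le \<longrightarrow> r \<in> pos_cone le)}"

definition localizable :: "('a::comm_ring_1 \<Rightarrow> 'a \<Rightarrow> bool) \<Rightarrow> bool" where
  "localizable le \<longleftrightarrow> (\<forall>r. \<exists>s\<in>Loc le. le (- s) r \<and> le r s)"

end

theory Submission
  imports Defs
begin

fun gw :: "'a::comm_ring_1 \<Rightarrow> 'a \<Rightarrow> nat \<Rightarrow> int \<Rightarrow> 'a" where
  "gw a b 0 d = of_int (d*d)"
| "gw a b (Suc n) d = a * gw a b n (d+1) + b * gw a b n (d-1)"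

lemma gw_id:
  "(a+b)^2 * gw a b n d = (a+b)^n * (of_int d * of_int d * (a+b)^2
     + 2 * of_int d * of_nat n * (a-b) * (a+b) + of_nat n * (a+b)^2
     + of_nat n * (of_nat n - 1) * (a-b)^2)"
proof (induction n arbitrary: d)
  case 0
  then show ?case by (simp add: algebra_simps)
next
  case (Suc n)
  have "(a+b)^2 * gw a b (Suc n) d = a * ((a+b)^2 * gw a b n (d+1)) + b * ((a+b)^2 * gw a b n (d-1))"
    by (simp add: algebra_simps)
  also have "\<dots> = (a+b)^Suc n * (of_int d * of_int d * (a+b)^2
     + 2 * of_int d * of_nat (Suc n) * (a-b) * (a+b) + of_nat (Suc n) * (a+b)^2
     + of_nat (Suc n) * (of_nat (Suc n) - 1) * (a-b)^2)"
    unfolding Suc.IH by (simp add: algebra_simps power2_eq_square)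
  finally show ?case .
qed

theorem proposition4:
  fixes le :: "'a::comm_ring_1 \<Rightarrow> 'a \<Rightarrow> bool"
  assumes "trans_inv_porder le"
    and "\<forall>a\<in>pos_cone le. \<forall>b\<in>pos_cone le. a * b \<in> pos_cone le"
    and "archimedean_ord le"
    and "localizable le"
  shows "\<forall>r. r * r \<in> pos_cone le"
proof
  fix r :: 'a
  define P where "P = pos_cone le"
  have Pdef: "x \<in> P \<longleftrightarrow> le 0 x" for x by (simp add: P_def pos_cone_def)
  have refl: "le x x" for x using assms(1) unfolding trans_inv_porder_def reflp_def by blast
  have trans: "le x y \<Longrightarrow> le y z \<Longrightarrow> le x z" for x y z
    using assms(1) unfolding trans_inv_porder_def transp_def by blast
  have tr: "le x y \<Longrightarrow> le (x + t) (y + t)" for x y t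
    using assms(1) unfolding trans_inv_porder_def by blast
  have mul: "x \<in> P \<Longrightarrow> y \<in> P \<Longrightarrow> x * y \<in> P" for x y using assms(2) P_def by blast
  have add: "x \<in> P \<Longrightarrow> y \<in> P \<Longrightarrow> x + y \<in> P" for x y
  proof -
    assume "x \<in> P" "y \<in> P"
    then have "le (0 + y) (x + y)" "le 0 y" using tr Pdef by blast+
    then show ?thesis using trans Pdef by auto
  qed
  have zero: "0 \<in> P" using refl Pdef by blast
  have locI: "s \<in> Loc le \<Longrightarrow> x * s \<in> P \<Longrightarrow> x \<in> P" for s x
    by (simp add: Loc_def P_def)
  have locP: "s \<in> Loc le \<Longrightarrow> \<exists>p\<in>P. s = 1 + p" for s by (simp add: Loc_def P_def)
  have bnd: "\<exists>s\<in>Loc le. le (- s) x \<and> le x s" for x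
    using assms(4) unfolding localizable_def by blast
  obtain s0 where s0: "s0 \<in> Loc le" "le 0 s0" using bnd[of 0] by blast
  have one: "1 \<in> P" using locI[OF s0(1), of 1] s0(2) Pdef by simp
  have nat: "of_nat n \<in> P" for n
    by (induction n) (auto simp: zero add one)
  have locpos: "s \<in> Loc le \<Longrightarrow> s \<in> P" for s using locP one add by blast
  have upper: "le x s \<Longrightarrow> s - x \<in> P" for x s
    using tr[of x s "- x"] Pdef by simp
  have lower: "le (-s) x \<Longrightarrow> s + x \<in> P" for x s
    using tr[of "-s" x s] Pdef by (simp add: add.commute)
  have natmul: "x \<in> P \<Longrightarrow> of_nat n * x \<in> P" for n x using mul nat by blast
  have powcancel: "s \<in> Loc le \<Longrightarrow> s ^ n * x \<in> P \<Longrightarrow> x \<in> P" for s n x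
  proof (induction n arbitrary: x)
    case 0 then show ?case by simp
  next
    case (Suc n)
    have "s ^ n * (x * s) \<in> P" using Suc.prems by (simp add: algebra_simps)
    then have "x * s \<in> P" using Suc.IH Suc.prems(1) by blast
    then show ?case using locI Suc.prems(1) by blast
  qed
  have div: "m \<ge> 1 \<Longrightarrow> of_nat m * w \<in> P \<Longrightarrow> w \<in> P" for m w
  proof -
    assume m: "m \<ge> 1" and mw: "of_nat m * w \<in> P"
    obtain t where t: "t \<in> Loc le" "le (-t) w" "le w t" using bnd by blast
    have tP: "t \<in> P" using locpos t(1) .
    have tw: "t + w \<in> P" using lower t(2) .
    have "\<forall>k::nat. k \<ge> 1 \<longrightarrow> of_nat k * w + of_nat m * t \<in> P"
    proof (intro allI impI)
      fix k :: nat
      define q where "q = k div m"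
      define \<rho> where "\<rho> = k mod m"
      have k: "k = q * m + \<rho>" by (simp add: q_def \<rho>_def)
      have rl: "\<rho> \<le> m" using m by (simp add: \<rho>_def less_imp_le)
      have "of_nat k * w + of_nat m * t
          = of_nat q * (of_nat m * w) + (of_nat \<rho> * (t + w) + of_nat (m - \<rho>) * t)"
        using rl by (simp add: k algebra_simps of_nat_diff)
      also have "\<dots> \<in> P"
        by (intro add natmul mw tw tP)
      finally show "of_nat k * w + of_nat m * t \<in> P" .
    qed
    then show "w \<in> P" using assms(3) unfolding archimedean_ord_def P_def by blast
  qed
  obtain s where s: "s \<in> Loc le" "le (-s) r" "le r s" using bnd by blast
  define a where "a = s + r"
  define b where "b = s - r"
  have aP: "a \<in> P" using lower s(2) a_def by simp
  have bP: "b \<in> P" using upper s(3) b_def by simp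
  have sP: "s \<in> P" using locpos s(1) .
  have gwP: "gw a b n d \<in> P" for n d
  proof (induction n arbitrary: d)
    case 0
    have "(of_int (d*d) :: 'a) = of_nat (nat (d*d))" by simp
    then show ?case unfolding gw.simps by (simp only: nat)
  next
    case (Suc n)
    then show ?case unfolding gw.simps by (intro add mul aP bP Suc.IH)
  qed
  have key: "of_nat k * (r * r) + s * s \<in> P" if k: "k \<ge> 1" for k
  proof -
    define n where "n = Suc k"
    have ab1: "a + b = 2 * s" "a - b = 2 * r" by (simp_all add: a_def b_def)
    have "(a+b)^2 * gw a b n 0 = (a+b)^n * (of_nat n * (a+b)^2
       + of_nat n * (of_nat n - 1) * (a-b)^2)"
      using gw_id[of a b n 0] by simp
    also have "\<dots> = s ^ n * (of_nat (4 * n * 2 ^ n) * (of_nat k * (r * r) + s * s))"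
      unfolding ab1 n_def by (simp add: algebra_simps power2_eq_square power_mult_distrib)
    finally have eq: "(a+b)^2 * gw a b n 0 = s ^ n * (of_nat (4 * n * 2 ^ n) * (of_nat k * (r * r) + s * s))" .
    have "(a+b)^2 * gw a b n 0 \<in> P" using mul add aP bP gwP by (simp add: power2_eq_square)
    then have "s ^ n * (of_nat (4 * n * 2 ^ n) * (of_nat k * (r * r) + s * s)) \<in> P"
      by (simp only: eq)
    then have "of_nat (4 * n * 2 ^ n) * (of_nat k * (r * r) + s * s) \<in> P"
      by (rule powcancel[OF s(1)])
    then show ?thesis using div[of "4 * n * 2 ^ n"] by (simp add: n_def)
  qed
  have "\<forall>k::nat. k \<ge> 1 \<longrightarrow> of_nat k * (r * r) + s * s \<in> pos_cone le"
    using key P_def by blast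
  then show "r * r \<in> pos_cone le" using assms(3) unfolding archimedean_ord_def by blast
qed

end
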